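(* Let $0<\alpha<1<\eta<2$ and let $D\subseteq\mathbb R^d$ have the property: for each $i\in\{1,\dots,d\}$ with $\mathfrak s_i=1$, if $x,y\in D$ then $y+d(x,y)\mathbf e_i\in D$. Then for all germs $U$ over $D$ and all $R>0$, $$\sup_{x\in D}[U_x]_{C^\alpha(D\cap B_R(x))}\lesssim\big(\|U\|_{G^\eta(D)}+[U]_{G^{\eta,\alpha}(D)}\big)R^{\eta-\alpha},$$ with an implicit constant independent of $U$, $R$ and $D$.
   Context: Fix a scaling $\mathfrak s\in\mathbb N^d$; for $\beta\in\mathbb N_0^d$, $|\beta|:=\sum_i\mathfrak s_i\beta_i$; $d(x,y):=\sum_i|x_i-y_i|^{1/\mathfrak s_i}$, $B_R(x)$ the open ball for $d$, $\mathcal P_k$ the polynomials $\sum_{|\beta|\le k}c_\beta z^\beta$. A germ over $D$ is a family $U=(U_x)_{x\in D}$ of continuous $U_x:D\to\mathbb C$; $\|U\|_{G^\eta(D)}$ is the infimum of $M>0$ with $|U_x(y)|\le M\,d(x,y)^\eta$ for all $x,y\in D$; $[U]_{G^{\eta,\alpha}(D)}$ is the infimum of $M>0$ such that for all $x,y\in D$ there is $P\in\mathcal P_{\lfloor\eta\rfloor}$ with $|(U_x-U_y-P)(z)|\le M\,d(y,z)^\alpha(d(x,y)+d(y,z))^{\eta-\alpha}$ for all $z\in D$. For $\alpha\in(0,1)$ and $A\subseteq\mathbb R^d$, $[f]_{C^\alpha(A)}:=\sup_{y,z\in A,\,y\ne z}|f(y)-f(z)|/d(y,z)^\alpha$. 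*)

theory Defs
  imports "HOL-Analysis.Analysis"
begin

text \<open>Points of R^d are vectors real^'n (d = CARD('n)); a scaling is s :: 'n => nat
  (assumed positive). Germs are complex-valued.\<close>

definition sdist :: "('n::finite \<Rightarrow> nat) \<Rightarrow> real^'n \<Rightarrow> real^'n \<Rightarrow> real" where
  "sdist s x y = (\<Sum>i\<in>UNIV. \<bar>x$i - y$i\<bar> powr (1 / real (s i)))"

definition sball :: "('n::finite \<Rightarrow> nat) \<Rightarrow> real^'n \<Rightarrow> real \<Rightarrow> (real^'n) set" where
  "sball s x R = {y. sdist s x y < R}"

definition sdeg :: "('n::finite \<Rightarrow> nat) \<Rightarrow> ('n \<Rightarrow> nat) \<Rightarrow> nat" where
  "sdeg s \<beta> = (\<Sum>i\<in>UNIV. s i * \<beta> i)"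

definition spoly :: "('n::finite \<Rightarrow> nat) \<Rightarrow> nat \<Rightarrow> (real^'n \<Rightarrow> complex) \<Rightarrow> bool" where
  "spoly s k P \<longleftrightarrow> (\<exists>c :: ('n \<Rightarrow> nat) \<Rightarrow> complex.
     P = (\<lambda>z. \<Sum>\<beta>\<in>{\<beta>. sdeg s \<beta> \<le> k}. c \<beta> * (\<Prod>i\<in>UNIV. complex_of_real (z$i) ^ \<beta> i)))"

definition is_germ :: "(real^'n::finite) set \<Rightarrow> (real^'n \<Rightarrow> real^'n \<Rightarrow> complex) \<Rightarrow> bool" where
  "is_germ D U \<longleftrightarrow> (\<forall>x\<in>D. continuous_on D (U x))"

text \<open>||U||_{G^eta(D)} as an extended real (infimum; +infinity if no bound exists).\<close>
definition germ_norm :: "('n::finite \<Rightarrow> nat) \<Rightarrow> real \<Rightarrow> (real^'n) set \<Rightarrow> (real^'n \<Rightarrow> real^'n \<Rightarrow> complex) \<Rightarrow> ereal" where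
  "germ_norm s \<eta> D U = Inf {ereal M | M. M > 0 \<and>
     (\<forall>x\<in>D. \<forall>y\<in>D. cmod (U x y) \<le> M * sdist s x y powr \<eta>)}"

definition germ_seminorm :: "('n::finite \<Rightarrow> nat) \<Rightarrow> real \<Rightarrow> real \<Rightarrow> (real^'n) set \<Rightarrow> (real^'n \<Rightarrow> real^'n \<Rightarrow> complex) \<Rightarrow> ereal" where
  "germ_seminorm s \<eta> \<alpha> D U = Inf {ereal M | M. M > 0 \<and>
     (\<forall>x\<in>D. \<forall>y\<in>D. \<exists>P. spoly s (nat \<lfloor>\<eta>\<rfloor>) P \<and>
        (\<forall>z\<in>D. cmod (U x z - U y z - P z)
              \<le> M * sdist s y z powr \<alpha> * (sdist s x y + sdist s y z) powr (\<eta> - \<alpha>)))}"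

definition holder_seminorm :: "('n::finite \<Rightarrow> nat) \<Rightarrow> real \<Rightarrow> (real^'n) set \<Rightarrow> (real^'n \<Rightarrow> complex) \<Rightarrow> ereal" where
  "holder_seminorm s \<alpha> A f = Sup {ereal (cmod (f y - f z) / sdist s y z powr \<alpha>) | y z.
     y \<in> A \<and> z \<in> A \<and> y \<noteq> z}"

end

theory Submission
  imports Defs
begin

lemma powr_ge_self:
  fixes t p :: real
  assumes "0 \<le> t" "t \<le> 1" "0 < p" "p \<le> 1"
  shows "t \<le> t powr p"
proof (cases "t = 0")
  case True then show ?thesis by simp
next
  case False
  then have tp: "0 < t powr p" "t powr p \<le> 1" using assms by (auto simp: powr_le1)
  have "(t powr p) powr (1/p) \<le> t powr p"
    using tp assms by (intro powr_le_one_le) auto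
  moreover have "(t powr p) powr (1/p) = t" using assms False by (simp add: powr_powr)
  ultimately show ?thesis by simp
qed

lemma powr_subadd:
  fixes a b p :: real
  assumes "0 \<le> a" "0 \<le> b" "0 < p" "p \<le> 1"
  shows "(a + b) powr p \<le> a powr p + b powr p"
proof (cases "a + b = 0")
  case True then show ?thesis using assms by simp
next
  case False
  then have ab: "a + b > 0" using assms by simp
  define t where "t = a / (a + b)"
  have t01: "0 \<le> t" "t \<le> 1" using assms ab by (auto simp: t_def)
  have 1: "t \<le> t powr p" using powr_ge_self t01 assms by auto
  have 2: "1 - t \<le> (1 - t) powr p" using powr_ge_self t01 assms by auto
  have a: "a = t * (a + b)" and b: "b = (1 - t) * (a + b)" using ab by (auto simp: t_def field_simps)
  have "a powr p + b powr p = (a+b) powr p * (t powr p + (1 - t) powr p)"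
  proof -
    have "a powr p = t powr p * (a+b) powr p" using t01 ab by (subst a) (simp add: powr_mult)
    moreover have "b powr p = (1 - t) powr p * (a+b) powr p" using t01 ab by (subst b) (simp add: powr_mult)
    ultimately show ?thesis by (simp add: algebra_simps)
  qed
  also have "\<dots> \<ge> (a+b) powr p * 1"
    using 1 2 by (intro mult_left_mono) auto
  finally show ?thesis by simp
qed

lemma sdist_nonneg: "0 \<le> sdist s x y"
  unfolding sdist_def by (intro sum_nonneg) auto

lemma sdist_self: "sdist s x x = 0"
  unfolding sdist_def by simp

lemma sdist_sym: "sdist s x y = sdist s y x"
  unfolding sdist_def by (simp add: abs_minus_commute)

lemma sdist_triangle:
  assumes "\<forall>i. s i \<ge> 1"
  shows "sdist s x z \<le> sdist s x y + sdist s y z"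
  unfolding sdist_def sum.distrib[symmetric]
proof (intro sum_mono)
  fix i
  have p: "0 < 1 / real (s i)" "1 / real (s i) \<le> 1" using assms[rule_format, of i] by auto
  have "\<bar>x $ i - z $ i\<bar> powr (1 / real (s i)) \<le> (\<bar>x $ i - y $ i\<bar> + \<bar>y $ i - z $ i\<bar>) powr (1 / real (s i))"
    using p by (intro powr_mono2) auto
  also have "\<dots> \<le> \<bar>x $ i - y $ i\<bar> powr (1 / real (s i)) + \<bar>y $ i - z $ i\<bar> powr (1 / real (s i))"
    using p by (intro powr_subadd) auto
  finally show "\<bar>x $ i - z $ i\<bar> powr (1 / real (s i)) \<le> \<bar>x $ i - y $ i\<bar> powr (1 / real (s i)) + \<bar>y $ i - z $ i\<bar> powr (1 / real (s i))" .
qed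

lemma sdist_coord: "\<bar>x $ i - y $ i\<bar> powr (1 / real (s i)) \<le> sdist s x y"
  unfolding sdist_def by (rule member_le_sum) auto

lemma sdist_coord1: "s i = 1 \<Longrightarrow> \<bar>x $ i - y $ i\<bar> \<le> sdist s x y"
  using sdist_coord[of x i y s] by (cases "x $ i = y $ i") auto

lemma sdist_pos: assumes "x \<noteq> y" shows "0 < sdist s x y"
proof -
  obtain i where "x $ i \<noteq> y $ i" using assms by (metis vec_eq_iff)
  then have "0 < \<bar>x $ i - y $ i\<bar> powr (1 / real (s i))" by simp
  then show ?thesis using sdist_coord[of x i y s] by linarith
qed

lemma sdist_axis:
  assumes "s i = 1" "0 \<le> h"
  shows "sdist s y (y + h *\<^sub>R axis i 1) = h"
proof -
  have "sdist s y (y + h *\<^sub>R axis i 1) = (\<Sum>j\<in>UNIV. if j = i then h else 0)"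
    unfolding sdist_def using assms
    by (intro sum.cong) (auto simp: axis_def)
  then show ?thesis by simp
qed

lemma sdeg_le1:
  assumes s1: "\<forall>i. s i \<ge> 1" and "sdeg s \<beta> \<le> 1" and "\<beta> \<noteq> (\<lambda>_. 0)"
  shows "\<exists>i. s i = 1 \<and> \<beta> = (\<lambda>j. if j = i then 1 else 0)"
proof -
  obtain i where bi: "\<beta> i \<noteq> 0" using assms(3) by auto
  have split: "sdeg s \<beta> = s i * \<beta> i + (\<Sum>j\<in>UNIV - {i}. s j * \<beta> j)"
    unfolding sdeg_def by (simp add: sum.remove)
  have si: "s i * \<beta> i \<ge> 1" using bi s1[rule_format, of i] by (simp add: Suc_le_eq)
  then have "s i * \<beta> i = 1" and rest: "(\<Sum>j\<in>UNIV - {i}. s j * \<beta> j) = 0"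
    using split assms(2) by linarith+
  then have "s i = 1" "\<beta> i = 1" by auto
  moreover have "\<beta> j = 0" if "j \<noteq> i" for j
  proof -
    have "s j * \<beta> j = 0" using rest that by simp
    then show ?thesis using s1[rule_format, of j] by simp
  qed
  ultimately show ?thesis by (intro exI[of _ i]) auto
qed

lemma spoly1:
  assumes s1: "\<forall>i. s i \<ge> 1" and "spoly s 1 P"
  shows "\<exists>a b. \<forall>z. P z = a + (\<Sum>i\<in>{i. s i = 1}. b i * complex_of_real (z $ i))"
proof -
  obtain c where P: "P = (\<lambda>z. \<Sum>\<beta>\<in>{\<beta>. sdeg s \<beta> \<le> 1}. c \<beta> * (\<Prod>i\<in>UNIV. complex_of_real (z$i) ^ \<beta> i))"
    using assms(2) unfolding spoly_def by blast
  define \<delta> :: "'a \<Rightarrow> 'a \<Rightarrow> nat" where "\<delta> = (\<lambda>i j. if j = i then 1 else 0)"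
  have S: "{\<beta>. sdeg s \<beta> \<le> 1} = insert (\<lambda>_. 0) (\<delta> ` {i. s i = 1})"
  proof (intro set_eqI iffI)
    fix \<beta> assume "\<beta> \<in> {\<beta>. sdeg s \<beta> \<le> 1}"
    then show "\<beta> \<in> insert (\<lambda>_. 0) (\<delta> ` {i. s i = 1})"
      using sdeg_le1[OF s1, of \<beta>] unfolding \<delta>_def by auto
  next
    fix \<beta> assume "\<beta> \<in> insert (\<lambda>_. 0) (\<delta> ` {i. s i = 1})"
    then show "\<beta> \<in> {\<beta>. sdeg s \<beta> \<le> 1}"
    proof
      assume "\<beta> = (\<lambda>_. 0)" then show ?thesis by (simp add: sdeg_def)
    next
      assume "\<beta> \<in> \<delta> ` {i. s i = 1}"
      then obtain i where "s i = 1" "\<beta> = \<delta> i" by auto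
      then have "sdeg s \<beta> = (\<Sum>j\<in>UNIV. if j = i then 1 else 0)"
        unfolding sdeg_def \<delta>_def by (intro sum.cong) auto
      then show ?thesis by simp
    qed
  qed
  have notin: "(\<lambda>_. 0) \<notin> \<delta> ` {i. s i = 1}"
    unfolding \<delta>_def by (auto dest: fun_cong[where x = i for i] split: if_splits)
  have inj: "inj_on \<delta> {i. s i = 1}"
    unfolding \<delta>_def inj_on_def by (metis one_neq_zero)
  have "P z = c (\<lambda>_. 0) + (\<Sum>i\<in>{i. s i = 1}. c (\<delta> i) * complex_of_real (z $ i))" for z
  proof -
    have pr: "(\<Prod>j\<in>UNIV. complex_of_real (z$j) ^ \<delta> i j) = complex_of_real (z $ i)" for i
    proof -
      have "(\<Prod>j\<in>UNIV. complex_of_real (z$j) ^ \<delta> i j) = (\<Prod>j\<in>UNIV. if j = i then complex_of_real (z$j) else 1)"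
        unfolding \<delta>_def by (intro prod.cong) auto
      then show ?thesis by simp
    qed
    have fin: "finite (\<delta> ` {i. s i = 1})" by simp
    show ?thesis unfolding P S sum.insert[OF fin notin] sum.reindex[OF inj]
      by (simp add: pr)
  qed
  then show ?thesis by (intro exI[of _ "c (\<lambda>_. 0)"] exI[of _ "\<lambda>i. c (\<delta> i)"]) blast
qed

lemma powr_split_bound:
  fixes \<delta> R a b :: real
  assumes "0 \<le> \<delta>" "\<delta> \<le> c * R" "0 < R" "0 \<le> b" "b \<le> 2" "1 \<le> c"
  shows "\<delta> powr (a + b) \<le> c powr 2 * R powr b * \<delta> powr a"
proof -
  have e: "\<delta> powr (a + b) = \<delta> powr a * \<delta> powr b" by (simp add: powr_add)
  have "\<delta> powr b \<le> (c * R) powr b" using assms by (intro powr_mono2) auto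
  also have "(c * R) powr b = c powr b * R powr b" using assms by (simp add: powr_mult)
  also have "c powr b \<le> c powr 2" using assms by (intro powr_mono) auto
  finally have "\<delta> powr b \<le> c powr 2 * R powr b" by (simp add: mult_right_mono)
  then have "\<delta> powr a * \<delta> powr b \<le> \<delta> powr a * (c powr 2 * R powr b)"
    by (intro mult_left_mono) auto
  then show ?thesis using e by (simp add: algebra_simps)
qed

lemma core:
  fixes U :: "real^'n::finite \<Rightarrow> real^'n \<Rightarrow> complex" and s :: "'n \<Rightarrow> nat"
  assumes s1: "\<forall>i. s i \<ge> 1" and al: "0 < \<alpha>" "\<alpha> < 1" and et: "1 < \<eta>" "\<eta> < 2"
   and hD: "\<forall>i. s i = 1 \<longrightarrow> (\<forall>x\<in>D. \<forall>y\<in>D. y + sdist s x y *\<^sub>R axis i 1 \<in> D)"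
   and xD: "x \<in> D" and yD: "y \<in> D" and zD: "z \<in> D"
   and xy: "sdist s x y < R" and xz: "sdist s x z < R"
   and N: "\<forall>x\<in>D. \<forall>y\<in>D. cmod (U x y) \<le> N * sdist s x y powr \<eta>" and Npos: "N > 0"
   and M: "\<forall>x\<in>D. \<forall>y\<in>D. \<exists>P. spoly s (nat \<lfloor>\<eta>\<rfloor>) P \<and>
        (\<forall>z\<in>D. cmod (U x z - U y z - P z)
              \<le> M * sdist s y z powr \<alpha> * (sdist s x y + sdist s y z) powr (\<eta> - \<alpha>))"
   and Mpos: "M > 0"
  shows "cmod (U x y - U x z) \<le> 24 * (real CARD('n) + 1) * (N + M) * (R powr (\<eta> - \<alpha>) * sdist s y z powr \<alpha>)"
proof -
  define \<delta> where "\<delta> = sdist s y z"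
  define K where "K = R powr (\<eta> - \<alpha>) * \<delta> powr \<alpha>"
  have d0: "0 \<le> \<delta>" unfolding \<delta>_def by (rule sdist_nonneg)
  have R0: "0 < R" using xy sdist_nonneg[of s x y] by linarith
  have K0: "0 \<le> K" unfolding K_def by simp
  have d2R: "\<delta> \<le> 2 * R"
    using sdist_triangle[OF s1, where x=y and y=x and z=z] sdist_sym[of s x y] xy xz unfolding \<delta>_def by linarith
  have Udiag: "U w w = 0" if "w \<in> D" for w
    using N[rule_format, OF that that] et by (simp add: sdist_self)
  have F1: "\<delta> powr \<eta> \<le> 4 * K"
    using powr_split_bound[OF d0 d2R R0, of "\<eta> - \<alpha>" \<alpha>] al et unfolding K_def by (simp add: mult.assoc)
  have NM0: "0 \<le> N + M" using Npos Mpos by simp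
  show ?thesis
  proof (cases "x = y")
    case True
    have "cmod (U x y - U x z) = cmod (U y z)" using True Udiag[OF yD] by simp
    also have "\<dots> \<le> N * \<delta> powr \<eta>" using N yD zD unfolding \<delta>_def by blast
    also have "\<dots> \<le> N * (4 * K)" using F1 Npos by (intro mult_left_mono) auto
    also have "\<dots> \<le> 24 * (real CARD('n) + 1) * (N + M) * K"
    proof -
      have "N * (4 * K) \<le> (N + M) * (4 * K)" using Mpos K0 by (intro mult_right_mono) auto
      also have "\<dots> \<le> (N + M) * (24 * (real CARD('n) + 1) * K)"
        using NM0 K0 by (intro mult_left_mono mult_right_mono) auto
      finally show ?thesis by (simp add: algebra_simps)
    qed
    finally show ?thesis unfolding K_def \<delta>_def .
  next
    case False
    define h where "h = sdist s x y"
    have h0: "0 < h" using sdist_pos[OF False] unfolding h_def .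
    have hR: "h < R" using xy unfolding h_def .
    obtain P where Pp: "spoly s (nat \<lfloor>\<eta>\<rfloor>) P"
      and PE: "\<forall>w\<in>D. cmod (U x w - U y w - P w) \<le> M * sdist s y w powr \<alpha> * (h + sdist s y w) powr (\<eta> - \<alpha>)"
      using M xD yD unfolding h_def by blast
    have "\<lfloor>\<eta>\<rfloor> = 1" using et by (simp add: floor_eq_iff)
    then have "nat \<lfloor>\<eta>\<rfloor> = 1" by simp
    then obtain a b where Pab: "\<And>w. P w = a + (\<Sum>i\<in>{i. s i = 1}. b i * complex_of_real (w $ i))"
      using spoly1[OF s1] Pp by force
    define E where "E w = U x w - U y w - P w" for w
    have Ey: "E y = 0" using PE[rule_format, OF yD] al unfolding E_def by (simp add: sdist_self)
    have Uxy: "U x y = P y" using Ey Udiag[OF yD] unfolding E_def by simp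
    have Pdiff: "P w - P y = (\<Sum>i\<in>{i. s i = 1}. b i * complex_of_real (w $ i - y $ i))" for w
      unfolding Pab by (simp add: sum_subtractf[symmetric] algebra_simps)
    have bbound: "cmod (b i) \<le> 6 * (N + M) * h powr (\<eta> - 1)" if si: "s i = 1" for i
    proof -
      define w where "w = y + h *\<^sub>R axis i 1"
      have wD: "w \<in> D" using hD si xD yD unfolding w_def h_def by blast
      have yw: "sdist s y w = h" unfolding w_def using sdist_axis[where s=s and i=i, OF si] h0 by simp
      have xw: "sdist s x w \<le> 2 * h" using sdist_triangle[OF s1, where x=x and y=y and z=w] yw unfolding h_def by simp
      have "P w - P y = (\<Sum>j\<in>{i. s i = 1}. if j = i then b i * complex_of_real h else 0)"
        unfolding Pdiff by (intro sum.cong) (auto simp: w_def axis_def)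
      also have "\<dots> = b i * complex_of_real h" using si by simp
      finally have bh: "b i * complex_of_real h = U x w - U y w - E w - U x y"
        unfolding E_def Uxy by simp
      have hh: "h powr \<eta> = h * h powr (\<eta> - 1)" using h0 by (simp add: powr_diff)
      have t1: "cmod (U x w) \<le> N * (4 * h powr \<eta>)"
      proof -
        have "cmod (U x w) \<le> N * sdist s x w powr \<eta>" using N xD wD by blast
        also have "\<dots> \<le> N * (4 * h powr \<eta>)"
        proof -
          have "sdist s x w powr \<eta> \<le> 4 * h powr \<eta>"
            using powr_split_bound[OF sdist_nonneg xw h0, of \<eta> 0] et by (auto split: if_splits)
          then show ?thesis using Npos by (intro mult_left_mono) auto
        qed
        finally show ?thesis .
      qed
      have t2: "cmod (U y w) \<le> N * h powr \<eta>" using N yD wD yw by metis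
      have t3: "cmod (U x y) \<le> N * h powr \<eta>" using N xD yD unfolding h_def by blast
      have t4: "cmod (E w) \<le> M * (4 * h powr \<eta>)"
      proof -
        have "cmod (E w) \<le> M * h powr \<alpha> * (h + h) powr (\<eta> - \<alpha>)" using PE wD yw unfolding E_def by metis
        also have "(h + h) powr (\<eta> - \<alpha>) \<le> 2 powr 2 * h powr (\<eta> - \<alpha>)"
          using powr_split_bound[of "h+h" 2 h "\<eta> - \<alpha>" 0] h0 al et by simp
        finally have "cmod (E w) \<le> M * h powr \<alpha> * (4 * h powr (\<eta> - \<alpha>))"
          using Mpos by (simp add: mult_left_mono)
        also have "\<dots> = M * (4 * h powr \<eta>)" by (simp add: powr_add[symmetric] algebra_simps)
        finally show ?thesis .
      qed
      have "cmod (b i) * h = cmod (U x w - U y w - E w - U x y)"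
        using bh[symmetric] h0 by (simp add: norm_mult)
      also have "\<dots> \<le> cmod (U x w) + cmod (U y w) + cmod (E w) + cmod (U x y)"
        using norm_triangle_ineq4[of "U x w - U y w - E w" "U x y"] norm_triangle_ineq4[of "U x w - U y w" "E w"]
          norm_triangle_ineq4[of "U x w" "U y w"] by linarith
      also have "\<dots> \<le> (6 * (N + M)) * h powr \<eta>"
      proof -
        have "M * (4 * h powr \<eta>) \<le> M * (6 * h powr \<eta>)" using Mpos by (intro mult_left_mono) auto
        then show ?thesis using t1 t2 t3 t4 by (simp add: algebra_simps)
      qed
      finally have "cmod (b i) * h \<le> (6 * (N + M) * h powr (\<eta> - 1)) * h"
        unfolding hh by (simp add: algebra_simps)
      then show ?thesis using h0 by (rule mult_right_le_imp_le)
    qed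
    have lin: "cmod (b i * complex_of_real (z $ i - y $ i)) \<le> 24 * (N + M) * K" if si: "s i = 1" for i
    proof -
      have zy: "\<bar>z $ i - y $ i\<bar> \<le> \<delta>" using sdist_coord1[where s=s and i=i and x=y and y=z, OF si] unfolding \<delta>_def by (simp add: abs_minus_commute)
      have hpow: "h powr (\<eta> - 1) \<le> R powr (\<eta> - 1)" using h0 hR et by (intro powr_mono2) auto
      have dpow: "\<delta> \<le> 4 * R powr (1 - \<alpha>) * \<delta> powr \<alpha>"
      proof -
        have "\<delta> powr (\<alpha> + (1 - \<alpha>)) = \<delta>" using d0 by simp
        then show ?thesis using powr_split_bound[OF d0 d2R R0, where a=\<alpha> and b="1 - \<alpha>"] al by simp
      qed
      have "cmod (b i * complex_of_real (z $ i - y $ i)) = cmod (b i) * \<bar>z $ i - y $ i\<bar>"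
        by (simp only: norm_mult norm_of_real)
      also have "\<dots> \<le> (6 * (N + M) * R powr (\<eta> - 1)) * (4 * R powr (1 - \<alpha>) * \<delta> powr \<alpha>)"
      proof (rule mult_mono)
        show "cmod (b i) \<le> 6 * (N + M) * R powr (\<eta> - 1)"
          using order_trans[OF bbound[OF si] mult_left_mono[OF hpow]] NM0 by simp
        show "\<bar>z $ i - y $ i\<bar> \<le> 4 * R powr (1 - \<alpha>) * \<delta> powr \<alpha>" using zy dpow by linarith
      qed (use NM0 in auto)
      also have "\<dots> = 24 * (N + M) * (R powr (\<eta> - 1) * R powr (1 - \<alpha>)) * \<delta> powr \<alpha>"
        by (simp add: algebra_simps)
      also have "R powr (\<eta> - 1) * R powr (1 - \<alpha>) = R powr (\<eta> - \<alpha>)"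
        by (simp add: powr_add[symmetric])
      finally show ?thesis unfolding K_def by (simp add: algebra_simps)
    qed
    have "U x z - U x y = U y z + E z + (P z - P y)" unfolding E_def Uxy by simp
    then have "cmod (U x y - U x z) = cmod (U y z + E z + (P z - P y))"
      by (metis norm_minus_commute)
    then have tri: "cmod (U x y - U x z) \<le> cmod (U y z) + cmod (E z) + cmod (P z - P y)"
      using norm_triangle_ineq[of "U y z + E z" "P z - P y"] norm_triangle_ineq[of "U y z" "E z"] by linarith
    have u1: "cmod (U y z) \<le> N * (4 * K)"
    proof -
      have "cmod (U y z) \<le> N * \<delta> powr \<eta>" using N yD zD unfolding \<delta>_def by blast
      also have "\<dots> \<le> N * (4 * K)" using F1 Npos by (intro mult_left_mono) auto
      finally show ?thesis .
    qed
    have u2: "cmod (E z) \<le> M * (9 * K)"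
    proof -
      have "cmod (E z) \<le> M * \<delta> powr \<alpha> * (h + \<delta>) powr (\<eta> - \<alpha>)" using PE zD unfolding E_def \<delta>_def by blast
      also have "(h + \<delta>) powr (\<eta> - \<alpha>) \<le> 3 powr 2 * R powr (\<eta> - \<alpha>)"
        using powr_split_bound[of "h+\<delta>" 3 R "\<eta> - \<alpha>" 0] h0 d0 hR d2R R0 al et by simp
      finally have "cmod (E z) \<le> M * \<delta> powr \<alpha> * (9 * R powr (\<eta> - \<alpha>))"
        using Mpos by (simp add: mult_left_mono)
      then show ?thesis unfolding K_def by (simp add: algebra_simps)
    qed
    have u3: "cmod (P z - P y) \<le> real CARD('n) * (24 * (N + M) * K)"
    proof -
      have "cmod (P z - P y) \<le> (\<Sum>i\<in>{i. s i = 1}. cmod (b i * complex_of_real (z $ i - y $ i)))"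
        unfolding Pdiff by (rule norm_sum)
      also have "\<dots> \<le> (\<Sum>i\<in>{i. s i = 1}. 24 * (N + M) * K)" using lin by (intro sum_mono) auto
      also have "\<dots> = real (card {i. s i = 1}) * (24 * (N + M) * K)" by simp
      also have "\<dots> \<le> real CARD('n) * (24 * (N + M) * K)"
        using NM0 K0 by (intro mult_right_mono) (auto simp: card_mono)
      finally show ?thesis .
    qed
    have "cmod (U x y - U x z) \<le> N * (4 * K) + M * (9 * K) + real CARD('n) * (24 * (N + M) * K)"
      using tri u1 u2 u3 by linarith
    also have "\<dots> \<le> 24 * (real CARD('n) + 1) * (N + M) * K"
    proof -
      have "N * (4 * K) + M * (9 * K) + real CARD('n) * (24 * (N + M) * K)
          = (4 * N + 9 * M + 24 * (real CARD('n) * N) + 24 * (real CARD('n) * M)) * K"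
        by (simp add: algebra_simps)
      also have "\<dots> \<le> (24 * (real CARD('n) + 1) * (N + M)) * K"
      proof (rule mult_right_mono)
        have "0 \<le> real CARD('n) * N" "0 \<le> real CARD('n) * M" using Npos Mpos by auto
        then show "4 * N + 9 * M + 24 * (real CARD('n) * N) + 24 * (real CARD('n) * M) \<le> 24 * (real CARD('n) + 1) * (N + M)"
          using Npos Mpos by (simp add: algebra_simps)
      qed (rule K0)
      finally show ?thesis .
    qed
    finally show ?thesis unfolding K_def \<delta>_def .
  qed
qed

lemma ereal_bound:
  fixes q k :: real and A B :: "real set"
  assumes k: "k > 0" and A: "\<forall>a\<in>A. a > 0" and B: "\<forall>b\<in>B. b > 0"
    and qb: "\<forall>a\<in>A. \<forall>b\<in>B. q \<le> k * (a + b)"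
  shows "ereal q \<le> ereal k * (Inf (ereal ` A) + Inf (ereal ` B))"
proof (cases "A = {} \<or> B = {}")
  case True
  have iA: "Inf (ereal ` A) \<ge> 0" using A by (intro Inf_greatest) (auto simp: less_imp_le)
  have iB: "Inf (ereal ` B) \<ge> 0" using B by (intro Inf_greatest) (auto simp: less_imp_le)
  have "Inf (ereal ` A) = \<infinity> \<or> Inf (ereal ` B) = \<infinity>"
    using True by (auto simp: top_ereal_def)
  then have e: "Inf (ereal ` A) + Inf (ereal ` B) = \<infinity>"
    using iA iB by (cases "Inf (ereal ` A)"; cases "Inf (ereal ` B)") auto
  show ?thesis unfolding e using k by simp
next
  case False
  then have ne: "A \<noteq> {}" "B \<noteq> {}" by auto
  have bA: "bdd_below A" using A by (intro bdd_belowI[of _ 0]) (auto simp: less_imp_le)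
  have bB: "bdd_below B" using B by (intro bdd_belowI[of _ 0]) (auto simp: less_imp_le)
  have eA: "Inf (ereal ` A) = ereal (Inf A)" using ereal_Inf'[OF bA ne(1)] by simp
  have eB: "Inf (ereal ` B) = ereal (Inf B)" using ereal_Inf'[OF bB ne(2)] by simp
  have "q / k - Inf A \<le> Inf B"
  proof (rule cInf_greatest[OF ne(2)])
    fix b assume b: "b \<in> B"
    have "q / k - b \<le> Inf A"
    proof (rule cInf_greatest[OF ne(1)])
      fix a assume a: "a \<in> A"
      have "q \<le> k * (a + b)" using qb a b by blast
      then have "q / k \<le> a + b" using k by (simp add: divide_le_eq mult.commute)
      then show "q / k - b \<le> a" by simp
    qed
    then show "q / k - Inf A \<le> b" by simp
  qed
  then have "q / k \<le> Inf A + Inf B" by simp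
  then have "q \<le> k * (Inf A + Inf B)" using k by (simp add: divide_le_eq mult.commute)
  then show ?thesis unfolding eA eB by simp
qed

theorem lemma2p5:
  fixes s :: "'n::finite \<Rightarrow> nat" and \<alpha> \<eta> :: real
  assumes "\<forall>i. s i \<ge> 1" and "0 < \<alpha>" and "\<alpha> < 1" and "1 < \<eta>" and "\<eta> < 2"
  shows "\<exists>C>0. \<forall>(D :: (real^'n) set) (U :: real^'n \<Rightarrow> real^'n \<Rightarrow> complex) (R :: real).
     (\<forall>i. s i = 1 \<longrightarrow> (\<forall>x\<in>D. \<forall>y\<in>D. y + sdist s x y *\<^sub>R axis i 1 \<in> D)) \<longrightarrow>
     is_germ D U \<longrightarrow> R > 0 \<longrightarrow>
     (SUP x\<in>D. holder_seminorm s \<alpha> (D \<inter> sball s x R) (U x))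
       \<le> ereal C * (germ_norm s \<eta> D U + germ_seminorm s \<eta> \<alpha> D U) * ereal (R powr (\<eta> - \<alpha>))"
proof (intro exI[of _ "24 * (real CARD('n) + 1)"] conjI allI impI)
  show "0 < 24 * (real CARD('n) + 1)" by simp
  fix D :: "(real^'n) set" and U :: "real^'n \<Rightarrow> real^'n \<Rightarrow> complex" and R :: real
  assume hD: "\<forall>i. s i = 1 \<longrightarrow> (\<forall>x\<in>D. \<forall>y\<in>D. y + sdist s x y *\<^sub>R axis i 1 \<in> D)"
    and "is_germ D U" and R0: "R > 0"
  define C where "C = 24 * (real CARD('n) + 1)"
  define k where "k = C * R powr (\<eta> - \<alpha>)"
  have k0: "k > 0" unfolding k_def C_def using R0 by simp
  define A where "A = {M. M > 0 \<and> (\<forall>x\<in>D. \<forall>y\<in>D. cmod (U x y) \<le> M * sdist s x y powr \<eta>)}"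
  define B where "B = {M. M > 0 \<and>
     (\<forall>x\<in>D. \<forall>y\<in>D. \<exists>P. spoly s (nat \<lfloor>\<eta>\<rfloor>) P \<and>
        (\<forall>z\<in>D. cmod (U x z - U y z - P z)
              \<le> M * sdist s y z powr \<alpha> * (sdist s x y + sdist s y z) powr (\<eta> - \<alpha>)))}"
  have gn: "germ_norm s \<eta> D U = Inf (ereal ` A)" unfolding germ_norm_def A_def
    by (rule arg_cong[where f=Inf]) auto
  have gs: "germ_seminorm s \<eta> \<alpha> D U = Inf (ereal ` B)" unfolding germ_seminorm_def B_def
    by (rule arg_cong[where f=Inf]) auto
  have rhs: "ereal C * (germ_norm s \<eta> D U + germ_seminorm s \<eta> \<alpha> D U) * ereal (R powr (\<eta> - \<alpha>))
      = ereal k * (Inf (ereal ` A) + Inf (ereal ` B))"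
  proof -
    have "ereal (C * R powr (\<eta> - \<alpha>)) = ereal C * ereal (R powr (\<eta> - \<alpha>))" by simp
    then show ?thesis unfolding gn gs k_def by (simp only: ac_simps)
  qed
  have key: "ereal (cmod (U x y - U x z) / sdist s y z powr \<alpha>) \<le> ereal k * (Inf (ereal ` A) + Inf (ereal ` B))"
    if xD: "x \<in> D" and y: "y \<in> D \<inter> sball s x R" and z: "z \<in> D \<inter> sball s x R" and yz: "y \<noteq> z" for x y z
  proof (rule ereal_bound[OF k0])
    show "\<forall>a\<in>A. a > 0" "\<forall>b\<in>B. b > 0" unfolding A_def B_def by auto
    show "\<forall>a\<in>A. \<forall>b\<in>B. cmod (U x y - U x z) / sdist s y z powr \<alpha> \<le> k * (a + b)"
    proof (intro ballI)
      fix a b assume a: "a \<in> A" and b: "b \<in> B"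
      have dpos: "0 < sdist s y z powr \<alpha>" using sdist_pos[OF yz, where s=s] by simp
      have "cmod (U x y - U x z) \<le> C * (a + b) * (R powr (\<eta> - \<alpha>) * sdist s y z powr \<alpha>)"
        unfolding C_def
        by (rule core[OF assms hD xD])
           (use y z a b in \<open>auto simp: sball_def A_def B_def\<close>)
      then have "cmod (U x y - U x z) \<le> (k * (a + b)) * sdist s y z powr \<alpha>"
        unfolding k_def by (simp add: ac_simps)
      then show "cmod (U x y - U x z) / sdist s y z powr \<alpha> \<le> k * (a + b)"
        using dpos by (simp add: divide_le_eq)
    qed
  qed
  show "(SUP x\<in>D. holder_seminorm s \<alpha> (D \<inter> sball s x R) (U x))
       \<le> ereal C * (germ_norm s \<eta> D U + germ_seminorm s \<eta> \<alpha> D U) * ereal (R powr (\<eta> - \<alpha>))"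
    unfolding rhs C_def[symmetric]
  proof (rule SUP_least)
    fix x assume xD: "x \<in> D"
    show "holder_seminorm s \<alpha> (D \<inter> sball s x R) (U x) \<le> ereal k * (Inf (ereal ` A) + Inf (ereal ` B))"
      unfolding holder_seminorm_def
      by (rule Sup_least) (use key xD in blast)
  qed
qed

end
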